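(* Modularity is not local. That is, there exist graphs $G_1=(V_1,E_1)$ and $G_2=(V_2,E_2)$, a set $V_a\subseteq V_1\cap V_2$ such that $G_1$ and $G_2$ agree on $V_a$ and on the neighborhood of $V_a$, clusterings $C_a,D_a$ of $V_a$, a clustering $C_1$ of $V_1\setminus V_a$ and a clustering $C_2$ of $V_2\setminus V_a$, such that $Q_{\mathrm{mod}}(G_1,C_a\cup C_1)\ge Q_{\mathrm{mod}}(G_1,D_a\cup C_1)$ but $Q_{\mathrm{mod}}(G_2,C_a\cup C_2)< Q_{\mathrm{mod}}(G_2,D_a\cup C_2)$.
   Context: A (symmetric weighted) graph is a pair $G=(V,E)$ of a finite set $V$ and a function $E:V\times V\to\mathbb{R}_{\ge 0}$ with $E(i,j)=E(j,i)$; self loops are allowed. A clustering of $G$ is a partition of $V$ into nonempty pairwise disjoint sets (clusters); a clustering of the empty set is the empty collection. For $c\subseteq V$ let $v_c=\sum_{i\in c}\sum_{j\in V}E(i,j)$ (volume) and $w_c=\sum_{i,j\in c}E(i,j)$ (within weight). Modularity: $Q_{\mathrm{mod}}(G,C)=\sum_{c\in C}\left(\frac{w_c}{v_V}-\left(\frac{v_c}{v_V}\right)^2\right)$ (defined when $v_V>0$). Graphs $G_1=(V_1,E_1)$, $G_2=(V_2,E_2)$ agree on $V_a\subseteq V_1\cap V_2$ and its neighborhood if $E_1(i,j)=E_2(i,j)$ for all $i\in V_a$, $j\in V_1\cap V_2$; $E_1(i,j)=0$ for all $i\in V_a$, $j\in V_1\setminus V_2$; and $E_2(i,j)=0$ for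 all $i\in V_a$, $j\in V_2\setminus V_1$. A quality function $Q$ is local if for all such $G_1,G_2,V_a$ and all clusterings $C_a,D_a$ of $V_a$, $C_1$ of $V_1\setminus V_a$, $C_2$ of $V_2\setminus V_a$, $Q(G_1,C_a\cup C_1)\ge Q(G_1,D_a\cup C_1)$ implies $Q(G_2,C_a\cup C_2)\ge Q(G_2,D_a\cup C_2)$. *)

theory Defs
  imports Main "HOL-Library.Disjoint_Sets" Complex_Main
begin

text \<open>A symmetric weighted graph: a finite vertex set V and weights E on V x V
  (values of E outside V x V are irrelevant and never consulted).\<close>
definition is_graph :: "'a set \<Rightarrow> ('a \<Rightarrow> 'a \<Rightarrow> real) \<Rightarrow> bool" where
  "is_graph V E \<longleftrightarrow> finite V \<and> (\<forall>i\<in>V. \<forall>j\<in>V. E i j \<ge> 0 \<and> E i j = E j i)"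

definition is_clustering :: "'a set set \<Rightarrow> 'a set \<Rightarrow> bool" where
  "is_clustering C V \<longleftrightarrow> (\<forall>c\<in>C. c \<noteq> {}) \<and> disjoint C \<and> \<Union>C = V"

definition volume :: "'a set \<Rightarrow> ('a \<Rightarrow> 'a \<Rightarrow> real) \<Rightarrow> 'a set \<Rightarrow> real" where
  "volume V E c = (\<Sum>i\<in>c. \<Sum>j\<in>V. E i j)"

definition within_weight :: "('a \<Rightarrow> 'a \<Rightarrow> real) \<Rightarrow> 'a set \<Rightarrow> real" where
  "within_weight E c = (\<Sum>i\<in>c. \<Sum>j\<in>c. E i j)"

definition modularity :: "'a set \<Rightarrow> ('a \<Rightarrow> 'a \<Rightarrow> real) \<Rightarrow> 'a set set \<Rightarrow> real" where
  "modularity V E C = (\<Sum>c\<in>C. within_weight E c / volume V E V - (volume V E c / volume V E V)^2)"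

definition agree_on_nbhd ::
  "'a set \<Rightarrow> ('a \<Rightarrow> 'a \<Rightarrow> real) \<Rightarrow> 'a set \<Rightarrow> ('a \<Rightarrow> 'a \<Rightarrow> real) \<Rightarrow> 'a set \<Rightarrow> bool" where
  "agree_on_nbhd V1 E1 V2 E2 Va \<longleftrightarrow>
     Va \<subseteq> V1 \<inter> V2 \<and>
     (\<forall>i\<in>Va. \<forall>j\<in>V1 \<inter> V2. E1 i j = E2 i j) \<and>
     (\<forall>i\<in>Va. \<forall>j\<in>V1 - V2. E1 i j = 0) \<and>
     (\<forall>i\<in>Va. \<forall>j\<in>V2 - V1. E2 i j = 0)"

end

theory Submission
  imports Defs
begin

definition EE :: "nat \<Rightarrow> nat \<Rightarrow> real" where
  "EE i j = (if {i,j} = {0,1} then 1 else if {i,j} = {0,2} \<or> {i,j} = {1,2} then 3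
             else if {i,j} = {3,4} then 10 else 0)"

lemma EE_vals: "EE 0 0 = 0" "EE 0 1 = 1" "EE 1 0 = 1" "EE 0 2 = 3" "EE 2 0 = 3"
  "EE 1 2 = 3" "EE 2 1 = 3" "EE 3 4 = 10" "EE 4 3 = 10" "EE 1 1 = 0" "EE 2 2 = 0"
  "EE 3 3 = 0" "EE 4 4 = 0" "EE 0 3 = 0" "EE 0 4 = 0" "EE 1 3 = 0" "EE 1 4 = 0"
  "EE 2 3 = 0" "EE 2 4 = 0" "EE 3 0 = 0" "EE 4 0 = 0" "EE 3 1 = 0" "EE 4 1 = 0"
  "EE 3 2 = 0" "EE 4 2 = 0" "EE (Suc 0) 3 = 0" "EE (Suc 0) 4 = 0" "EE 3 (Suc 0) = 0" "EE 4 (Suc 0) = 0" "EE 0 (Suc 0) = 1" "EE (Suc 0) 0 = 1" "EE (Suc 0) 2 = 3" "EE 2 (Suc 0) = 3" "EE (Suc 0) (Suc 0) = 0"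
  by (auto simp: EE_def doubleton_eq_iff)

lemma EE_sym: "EE i j = EE j i"
  unfolding EE_def by (simp add: insert_commute)

lemma EE_nn: "EE i j \<ge> 0"
  unfolding EE_def by simp

theorem theorem2:
  shows "\<exists>(V1::nat set) E1 (V2::nat set) E2 Va Ca Da C1 C2.
    is_graph V1 E1 \<and> is_graph V2 E2 \<and>
    volume V1 E1 V1 > 0 \<and> volume V2 E2 V2 > 0 \<and>
    agree_on_nbhd V1 E1 V2 E2 Va \<and>
    is_clustering Ca Va \<and> is_clustering Da Va \<and>
    is_clustering C1 (V1 - Va) \<and> is_clustering C2 (V2 - Va) \<and>
    modularity V1 E1 (Ca \<union> C1) \<ge> modularity V1 E1 (Da \<union> C1) \<and>
    modularity V2 E2 (Ca \<union> C2) < modularity V2 E2 (Da \<union> C2)"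
proof -
  have v1: "{0,1,2,3,4::nat} - {0,1} = {2,3,4}" by auto
  have v2: "{0,1,2::nat} - {0,1} = {2}" by auto
  have s: "{0,1,2::nat} \<inter> {0,1,2,3,4} = {0,1,2}" "{0,1,2,3,4::nat} - {0,1,2} = {3,4}"
    "{0,1,2::nat} - {0,1,2,3,4} = {}" by auto
  have u1: "{{0,1::nat}} \<union> {{2},{3,4}} = {{0,1},{2},{3,4}}" by auto
  have u2: "{{0::nat},{1}} \<union> {{2},{3,4}} = {{0},{1},{2},{3,4}}" by auto
  have u3: "{{0,1::nat}} \<union> {{2}} = {{0,1},{2}}" by auto
  have u4: "{{0::nat},{1}} \<union> {{2}} = {{0},{1},{2}}" by auto
  have g1: "is_graph {0,1,2,3,4::nat} EE" "is_graph {0,1,2::nat} EE"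
    unfolding is_graph_def using EE_nn EE_sym by auto
  have ag: "agree_on_nbhd {0,1,2,3,4} EE {0,1,2} EE {0,1::nat}"
    unfolding agree_on_nbhd_def s by (auto simp: EE_vals)
  have c: "is_clustering {{0,1}} {0,1::nat}" "is_clustering {{0},{1}} {0,1::nat}"
     "is_clustering {{2},{3,4}} {2,3,4::nat}" "is_clustering {{2}} {2::nat}"
    unfolding is_clustering_def disjoint_def by auto
  have vol1: "volume {0,1,2,3,4} EE {0,1,2,3,4} = 34" and vol2: "volume {0,1,2} EE {0,1,2} = 14"
    by (simp_all add: volume_def EE_vals)
  have m1: "modularity {0,1,2,3,4} EE {{0,1},{2},{3,4}} \<ge> modularity {0,1,2,3,4} EE {{0},{1},{2},{3,4}}"
    unfolding modularity_def vol1 by (simp add: volume_def within_weight_def EE_vals doubleton_eq_iff power2_eq_square)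
  have m2: "modularity {0,1,2} EE {{0,1},{2}} < modularity {0,1,2} EE {{0},{1},{2}}"
    unfolding modularity_def vol2 by (simp add: volume_def within_weight_def EE_vals doubleton_eq_iff power2_eq_square)
  show ?thesis
    apply (rule exI[of _ "{0,1,2,3,4}"], rule exI[of _ EE], rule exI[of _ "{0,1,2}"], rule exI[of _ EE],
           rule exI[of _ "{0,1}"], rule exI[of _ "{{0,1}}"], rule exI[of _ "{{0},{1}}"],
           rule exI[of _ "{{2},{3,4}}"], rule exI[of _ "{{2}}"])
    unfolding v1 v2 u1 u2 u3 u4 using g1 ag c m1 m2 vol1 vol2 by simp
qed

end
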